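(* Under the setting described in the context, there exists $c_{\lambda_i}>0$, independent of $h$, such that $$\|\mathcal{P}_{m_h^\ell}v\|_{a_h^\ell}\le c_{\lambda_i}\|v\|_{m_h^\ell}\qquad\text{for all }v\in H^1(\Omega,\Gamma).$$
   Context: Let $d\in\{2,3\}$ and $\Omega\subset\mathbb{R}^d$ a nonempty bounded connected open set with smooth boundary $\Gamma=\partial\Omega$; fix integers $r\ge1$, $k\ge1$; $\Omega$ is at least $C^{r+2}$ and $C^{k+1}$ regular. $H^1(\Omega,\Gamma)=\{u\in H^1(\Omega):u|_\Gamma\in H^1(\Gamma)\}$; $\nabla_\Gamma$ is the tangential gradient; $b(x)=x-\mathrm{d}(x)\nabla\mathrm{d}(x)$, $\mathrm{d}$ the signed distance to $\Gamma$, is the orthogonal projection onto $\Gamma$ near $\Gamma$. Continuous problem: $a(u,v)=\int_\Omega\nabla u\cdot\nabla v\,dx+\int_\Gamma\nabla_\Gamma u\cdot\nabla_\Gamma v\,ds+\int_\Gamma uv\,ds$, $m(u,v)=\int_\Omega uv\,dx$; eigenvalues $0<\lambda_1\le\lambda_2\le\dots$ of $a(u,v)=\lambda m(u,v)$ for all $v\in H^1(\Omega,\Gamma)$, counted with multiplicity. Fix $\lambda_i$ of multiplicity $N$, $J=\{i,\dots,i+N-1\}$. The mesh size $h$ is assumed small enough that the discrete eigenvalues $\Lambda_j$, $j\in J$, are bounded by a constant depending only on $\lambda_i$. Meshes and lift: $\mathcal{T}_h^{(1)}$ quasi-uniform simplicial meshes of size $h$ with boundary vertices on $\Gamma$, $T=F_T(\hat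 T)$ with $F_T$ affine. For $T$ with at least two vertices on $\Gamma$ (barycentric coordinates $\lambda_l$, vertices $\hat v_l$ of $\hat T$, $\varepsilon_l=1$ iff $F_T(\hat v_l)\in\Gamma$, $\lambda^*=\sum\varepsilon_l\lambda_l$, $\hat\sigma=\{\lambda^*=0\}$, $\hat y=\frac1{\lambda^*}\sum\varepsilon_l\lambda_l\hat v_l$): $F_T^{(e)}=F_T$ on $\hat\sigma$, $F_T^{(e)}(\hat x)=F_T(\hat x)+(\lambda^* )^{r+2}(b(F_T(\hat y))-F_T(\hat y))$ otherwise; else $F_T^{(e)}=F_T$. $F_T^{(r)}$ is the $\mathbb{P}^r$-Lagrange interpolant of $F_T^{(e)}$, $T^{(r)}=F_T^{(r)}(\hat T)$, $\Omega_h=\bigcup T^{(r)}$, $\Gamma_h=\partial\Omega_h$. $G_h:\Omega_h\to\Omega$ equals $F^{(e)}_{T^{(r)}}\circ(F_T^{(r)})^{-1}$ on $T^{(r)}$ (formula of $F_T^{(e)}$ with $F_T$ replaced by $F_T^{(r)}$); continuous, elementwise $C^1$-diffeomorphism, $G_h|_{\Gamma_h}=b$. Lift: $v^\ell\circ G_h=v$. Discrete: $\mathbb{V}_h=\{\chi\in C^0(\Omega_h):\chi|_{T^{(r)}}\circ F_T^{(r)}\in\mathbb{P}^k(\hat T)\}$; $a_h(U,V)=\int_{\Omega_h}\nabla U\cdot\nabla V+\int_{\Gamma_h}\nabla_{\Gamma_h}U\cdot\nabla_{\Gamma_h}V+\int_{\Gamma_h}UV$, $m_h(U,V)=\int_{\Omega_h}UV$;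 for $v,w\in H^1(\Omega,\Gamma)$, $a_h^\ell(v,w)=a_h(v\circ G_h,w\circ G_h)$, $m_h^\ell(v,w)=m_h(v\circ G_h,w\circ G_h)$, norms $\|v\|_{a_h^\ell}=a_h^\ell(v,v)^{1/2}$, $\|v\|_{m_h^\ell}=m_h^\ell(v,v)^{1/2}$. Discrete eigenpairs $(\Lambda_p,U_p)$: $a_h(U_p,V)=\Lambda_pm_h(U_p,V)$ for all $V\in\mathbb{V}_h$, increasing eigenvalues, $(U_p)$ $m_h$-orthonormal. $\mathbb{F}_h^\ell=\mathrm{span}\{U_j^\ell:j\in J\}$ and $\mathcal{P}_{m_h^\ell}v\in\mathbb{F}_h^\ell$ is defined by $m_h^\ell(\mathcal{P}_{m_h^\ell}v,w)=m_h^\ell(v,w)$ for all $w\in\mathbb{F}_h^\ell$. *)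

theory Defs
  imports "HOL-Analysis.Analysis"
begin

text \<open>Abstract rendering of the lifted discrete forms. A form on a set S
  is a real-valued function of two arguments; we require bilinearity and symmetry
  on a linear subspace S.\<close>

definition sym_bilinear_on :: "'f::real_vector set \<Rightarrow> ('f \<Rightarrow> 'f \<Rightarrow> real) \<Rightarrow> bool" where
  "sym_bilinear_on S b \<longleftrightarrow>
     (\<forall>u\<in>S. \<forall>v\<in>S. b u v = b v u) \<and>
     (\<forall>u\<in>S. \<forall>v\<in>S. \<forall>w\<in>S. \<forall>\<alpha> \<beta>. b (\<alpha> *\<^sub>R u + \<beta> *\<^sub>R v) w = \<alpha> * b u w + \<beta> * b v w)"

definition psd_on :: "'f set \<Rightarrow> ('f \<Rightarrow> 'f \<Rightarrow> real) \<Rightarrow> bool" where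
  "psd_on S b \<longleftrightarrow> (\<forall>u\<in>S. 0 \<le> b u u)"

definition form_norm :: "('f \<Rightarrow> 'f \<Rightarrow> real) \<Rightarrow> 'f \<Rightarrow> real" where
  "form_norm b v = sqrt (b v v)"

definition form_proj :: "('f \<Rightarrow> 'f \<Rightarrow> real) \<Rightarrow> 'f set \<Rightarrow> 'f \<Rightarrow> 'f" where
  "form_proj b F v = (THE p. p \<in> F \<and> (\<forall>w\<in>F. b p w = b v w))"

end

theory Submission
  imports Defs
begin

lemma sb_lin: "sym_bilinear_on S b \<Longrightarrow> u\<in>S \<Longrightarrow> v\<in>S \<Longrightarrow> w\<in>S \<Longrightarrow>
   b (\<alpha> *\<^sub>R u + \<beta> *\<^sub>R v) w = \<alpha> * b u w + \<beta> * b v w"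
  unfolding sym_bilinear_on_def by blast

lemma sb_sym: "sym_bilinear_on S b \<Longrightarrow> u\<in>S \<Longrightarrow> v\<in>S \<Longrightarrow> b u v = b v u"
  unfolding sym_bilinear_on_def by blast

lemma sb_diff: "sym_bilinear_on S b \<Longrightarrow> u\<in>S \<Longrightarrow> v\<in>S \<Longrightarrow> w\<in>S \<Longrightarrow>
   b (u - v) w = b u w - b v w"
  using sb_lin[of S b u v w 1 "-1"] by simp

lemma sb_zero: "sym_bilinear_on S b \<Longrightarrow> w\<in>S \<Longrightarrow> b 0 w = 0"
  using sb_lin[of S b w w w 0 0] by simp

lemma sb_sum:
  assumes "sym_bilinear_on S b" "subspace S" "finite A" "A \<subseteq> S" "w \<in> S"
  shows "b (\<Sum>y\<in>A. c y *\<^sub>R y) w = (\<Sum>y\<in>A. c y * b y w)"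
  using assms(3,4)
proof (induction A rule: finite_induct)
  case empty
  then show ?case using sb_zero[OF assms(1,5)] by simp
next
  case (insert a F)
  have r: "(\<Sum>y\<in>F. c y *\<^sub>R y) \<in> S"
    using insert by (intro subspace_sum[OF assms(2)] subspace_scale[OF assms(2)]) auto
  have "b (\<Sum>y\<in>insert a F. c y *\<^sub>R y) w = b (c a *\<^sub>R a + 1 *\<^sub>R (\<Sum>y\<in>F. c y *\<^sub>R y)) w"
    using insert by simp
  also have "\<dots> = c a * b a w + 1 * b (\<Sum>y\<in>F. c y *\<^sub>R y) w"
    using insert r by (intro sb_lin[OF assms(1)] assms(5)) auto
  finally show ?case using insert by simp
qed

theorem mainTheorem7:
  fixes H1 :: "'f::real_vector set"
    and hs :: "real set"
    and ah mh :: "real \<Rightarrow> 'f \<Rightarrow> 'f \<Rightarrow> real"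
    and Vl :: "real \<Rightarrow> 'f set"
    and nd :: "real \<Rightarrow> nat"
    and Lam :: "real \<Rightarrow> nat \<Rightarrow> real"
    and U :: "real \<Rightarrow> nat \<Rightarrow> 'f"
    and i N :: nat
    and C :: real
  assumes H1_sub: "subspace H1"
    and hs_pos: "\<forall>h\<in>hs. 0 < h"
    and Vl_sub: "\<forall>h\<in>hs. subspace (Vl h) \<and> Vl h \<subseteq> H1 \<and> dim (Vl h) = nd h"
    and a_form: "\<forall>h\<in>hs. sym_bilinear_on H1 (ah h) \<and> psd_on H1 (ah h)"
    and m_form: "\<forall>h\<in>hs. sym_bilinear_on H1 (mh h) \<and> psd_on H1 (mh h)"
    and basis: "\<forall>h\<in>hs. span (U h ` {1..nd h}) = Vl h"
    and eig_in: "\<forall>h\<in>hs. \<forall>p\<in>{1..nd h}. U h p \<in> Vl h"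
    and eig_eq: "\<forall>h\<in>hs. \<forall>p\<in>{1..nd h}. \<forall>w\<in>Vl h. ah h (U h p) w = Lam h p * mh h (U h p) w"
    and orthonormal: "\<forall>h\<in>hs. \<forall>p\<in>{1..nd h}. \<forall>q\<in>{1..nd h}.
                         mh h (U h p) (U h q) = (if p = q then 1 else 0)"
    and increasing: "\<forall>h\<in>hs. \<forall>p\<in>{1..nd h}. \<forall>q\<in>{1..nd h}. p \<le> q \<longrightarrow> Lam h p \<le> Lam h q"
    and i_pos: "1 \<le> i" and N_pos: "1 \<le> N"
    and J_in: "\<forall>h\<in>hs. i + N - 1 \<le> nd h"
    and eig_bound: "\<forall>h\<in>hs. \<forall>j\<in>{i..i + N - 1}. Lam h j \<le> C"
  shows "\<exists>c>0. \<forall>h\<in>hs. \<forall>v\<in>H1.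
           form_norm (ah h) (form_proj (mh h) (span (U h ` {i..i + N - 1})) v)
             \<le> c * form_norm (mh h) v"
proof (intro exI[of _ "sqrt (max C 1)"] conjI ballI)
  show "0 < sqrt (max C 1)" by simp
  fix h v assume h: "h \<in> hs" and v: "v \<in> H1"
  define K where "K = max C 1"
  define J where "J = {i..i + N - 1}"
  define S where "S = U h ` J"
  define a where "a = ah h"
  define m where "m = mh h"
  define c where "c y = m v y" for y
  define P where "P = (\<Sum>y\<in>S. c y *\<^sub>R y)"
  have Jsub: "J \<subseteq> {1..nd h}" using J_in h i_pos unfolding J_def by auto
  have fS: "finite S" unfolding S_def J_def by simp
  have SV: "S \<subseteq> Vl h" using eig_in h Jsub unfolding S_def by auto
  have VH: "Vl h \<subseteq> H1" and sV: "subspace (Vl h)" using Vl_sub h by auto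
  have SH: "S \<subseteq> H1" using SV VH by auto
  have mb: "sym_bilinear_on H1 m" and mp: "psd_on H1 m" using m_form h unfolding m_def by auto
  have ab: "sym_bilinear_on H1 a" and ap: "psd_on H1 a" using a_form h unfolding a_def by auto
  have orth: "m y z = (if y = z then 1 else 0)" if yz: "y \<in> S" "z \<in> S" for y z
  proof -
    obtain p q where p: "p \<in> J" "y = U h p" and q: "q \<in> J" "z = U h q"
      using yz unfolding S_def by auto
    show ?thesis
    proof (cases "y = z")
      case True
      then show ?thesis using orthonormal h p Jsub unfolding m_def by auto
    next
      case False
      then have "p \<noteq> q" using p q by auto
      moreover have "p \<in> {1..nd h}" "q \<in> {1..nd h}" using p q Jsub by auto
      ultimately show ?thesis using False orthonormal h p q unfolding m_def by auto
    qed
  qed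
  have PS: "P \<in> span S" unfolding P_def
    by (intro span_sum span_mul span_base) auto
  have spanSV: "span S \<subseteq> Vl h" using SV sV by (simp add: span_minimal)
  have spanH: "span S \<subseteq> H1" using spanSV VH by auto
  have PH: "P \<in> H1" using PS spanH by auto
  have mPy: "m P z = c z" if "z \<in> S" for z
  proof -
    have "m P z = (\<Sum>y\<in>S. c y * m y z)" unfolding P_def
      using that SH by (intro sb_sum[OF mb H1_sub fS]) auto
    also have "\<dots> = (\<Sum>y\<in>S. if y = z then c y else 0)"
      using orth that by (intro sum.cong) auto
    also have "\<dots> = c z" using that fS by simp
    finally show ?thesis .
  qed
  have myv: "m y v = c y" if "y \<in> S" for y
    using sb_sym[OF mb] that SH v unfolding c_def by auto
  have zero: "x = 0" if xS: "x \<in> span S" "\<forall>z\<in>S. m x z = 0" for x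
  proof -
    obtain d where d: "x = (\<Sum>y\<in>S. d y *\<^sub>R y)"
      using xS(1) span_finite[OF fS] by auto
    have "d z = 0" if z: "z \<in> S" for z
    proof -
      have "m x z = (\<Sum>y\<in>S. d y * m y z)" unfolding d
        using z SH by (intro sb_sum[OF mb H1_sub fS]) auto
      also have "\<dots> = (\<Sum>y\<in>S. if y = z then d y else 0)"
        using orth z by (intro sum.cong) auto
      also have "\<dots> = d z" using z fS by simp
      finally show ?thesis using \<open>\<forall>z\<in>S. m x z = 0\<close> z by simp
    qed
    then show ?thesis unfolding d by simp
  qed
  have myP: "m y P = c y" if yS: "y \<in> S" for y
    using sb_sym[OF mb, of y P] SH PH mPy yS by auto
  have Pprop: "\<forall>w\<in>span S. m P w = m v w"
  proof
    fix w assume w: "w \<in> span S"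
    obtain d where d: "w = (\<Sum>y\<in>S. d y *\<^sub>R y)"
      using w span_finite[OF fS] by auto
    have wH: "w \<in> H1" using w spanH by auto
    have "m P w = m w P" using sb_sym[OF mb PH wH] .
    also have "\<dots> = (\<Sum>y\<in>S. d y * m y P)" unfolding d
      using SH PH by (intro sb_sum[OF mb H1_sub fS]) auto
    also have "\<dots> = (\<Sum>y\<in>S. d y * m y v)"
      using myP myv by (intro sum.cong) auto
    also have "\<dots> = m w v" unfolding d
      using SH v by (intro sb_sum[OF mb H1_sub fS, symmetric]) auto
    also have "\<dots> = m v w" using sb_sym[OF mb wH v] .
    finally show "m P w = m v w" .
  qed
  have proj: "form_proj m (span S) v = P"
    unfolding form_proj_def
  proof (rule the_equality)
    show "P \<in> span S \<and> (\<forall>w\<in>span S. m P w = m v w)" using PS Pprop by blast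
  next
    fix p assume p: "p \<in> span S \<and> (\<forall>w\<in>span S. m p w = m v w)"
    have pH: "p \<in> H1" using p spanH by auto
    have "p - P = 0"
    proof (rule zero)
      show "p - P \<in> span S" using p PS by (simp add: span_diff)
      show "\<forall>z\<in>S. m (p - P) z = 0"
      proof
        fix z assume z: "z \<in> S"
        have "m (p - P) z = m p z - m P z" using sb_diff[OF mb pH PH] z SH by auto
        then show "m (p - P) z = 0" using p Pprop z span_base[of z S] by auto
      qed
    qed
    then show "p = P" by simp
  qed
  have aPP: "a P P \<le> K * (\<Sum>y\<in>S. c y * c y)"
  proof -
    have "a P P = (\<Sum>y\<in>S. c y * a y P)"
      using sb_sum[OF ab H1_sub fS SH PH, of c] unfolding P_def .
    also have "\<dots> \<le> (\<Sum>y\<in>S. K * (c y * c y))"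
    proof (rule sum_mono)
      fix y assume y: "y \<in> S"
      obtain p where p: "p \<in> J" "y = U h p" using y unfolding S_def by auto
      have p1: "p \<in> {1..nd h}" using p Jsub by auto
      have PV: "P \<in> Vl h" using PS spanSV by auto
      have "a y P = Lam h p * m y P"
        using eig_eq h p1 PV p(2) unfolding a_def m_def by blast
      also have "\<dots> = Lam h p * c y" using myP y by auto
      finally have e: "c y * a y P = Lam h p * (c y * c y)" by simp
      have "Lam h p \<le> K" using eig_bound h p unfolding K_def J_def by force
      then have "Lam h p * (c y * c y) \<le> K * (c y * c y)"
        by (intro mult_right_mono) auto
      then show "c y * a y P \<le> K * (c y * c y)" using e by linarith
    qed
    also have "\<dots> = K * (\<Sum>y\<in>S. c y * c y)" by (simp add: sum_distrib_left)
    finally show ?thesis .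
  qed
  have bessel: "(\<Sum>y\<in>S. c y * c y) \<le> m v v"
  proof -
    have mPv: "m P v = (\<Sum>y\<in>S. c y * c y)"
    proof -
      have "m P v = (\<Sum>y\<in>S. c y * m y v)" unfolding P_def
        using SH v by (intro sb_sum[OF mb H1_sub fS]) auto
      also have "\<dots> = (\<Sum>y\<in>S. c y * c y)" using myv by (intro sum.cong) auto
      finally show ?thesis .
    qed
    have mPP: "m P P = (\<Sum>y\<in>S. c y * c y)"
    proof -
      have "m P P = (\<Sum>y\<in>S. c y * m y P)"
        using sb_sum[OF mb H1_sub fS SH PH, of c] unfolding P_def .
      also have "\<dots> = (\<Sum>y\<in>S. c y * c y)"
        using myP by (intro sum.cong) auto
      finally show ?thesis .
    qed
    have dH: "v - P \<in> H1" using v PH H1_sub by (simp add: subspace_diff)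
    have "0 \<le> m (v - P) (v - P)" using mp dH unfolding psd_on_def by auto
    also have "\<dots> = m v (v - P) - m P (v - P)" using sb_diff[OF mb v PH dH] .
    also have "m v (v - P) = m v v - m P v"
      using sb_sym[OF mb v dH] sb_diff[OF mb v PH v] by simp
    also have "m P (v - P) = m v P - m P P"
      using sb_sym[OF mb PH dH] sb_diff[OF mb v PH PH] by simp
    also have "m v P = m P v" using sb_sym[OF mb v PH] .
    finally show ?thesis using mPv mPP by simp
  qed
  have K0: "0 \<le> K" unfolding K_def by simp
  have "a P P \<le> K * m v v" using aPP bessel K0
    by (meson mult_left_mono order_trans)
  then have "sqrt (a P P) \<le> sqrt K * sqrt (m v v)"
    by (metis real_sqrt_le_mono real_sqrt_mult)
  then show "form_norm (ah h) (form_proj (mh h) (span (U h ` {i..i + N - 1})) v)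
             \<le> sqrt (max C 1) * form_norm (mh h) v"
    using proj unfolding form_norm_def a_def m_def S_def J_def K_def by simp
qed

end
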